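(* Let $\Gamma=\langle V,(w_u)_{u\in V},\alpha,\beta\rangle$ be a celebrity game with $\beta>1$, $n=|V|$ and $W=\sum_{u\in V}w_u$. Then $\mathrm{opt}(\Gamma)=\min\{\alpha,W\}\,(n-1)$.
   Context: A celebrity game $\Gamma=\langle V,(w_u)_{u\in V},\alpha,\beta\rangle$ consists of a set of players $V=\{1,\dots,n\}$, celebrity weights $w_u>0$, a link cost $\alpha>0$ and a critical distance $\beta$ with $1\le\beta\le n-1$. A strategy of player $u$ is a set $S_u\subseteq V\setminus\{u\}$; a strategy profile is $S=(S_1,\dots,S_n)$; its outcome graph $G[S]$ is the undirected graph on $V$ with edge set $\{\{u,v\}: u\in S_v\text{ or }v\in S_u\}$. With $d_G$ the graph distance (infinite between different connected components), the cost of player $u$ is $c_u(S)=\alpha|S_u|+\sum_{v:\,d_{G[S]}(u,v)>\beta}w_v$, the social cost is $C(S)=\sum_{u\in V}c_u(S)$, and $\mathrm{opt}(\Gamma)=\min_S C(S)$ over all strategy profiles. *)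

theory Defs
  imports Main "HOL-Library.Extended_Nat"
begin

text \<open>A strategy profile is a function S :: nat => nat set;
  it is valid for n players if S u is a subset of V - {u} for u in V, and (as a
  normalisation) S u = {} for u outside V.\<close>

definition valid_profile :: "nat \<Rightarrow> (nat \<Rightarrow> nat set) \<Rightarrow> bool" where
  "valid_profile n S \<longleftrightarrow> (\<forall>u. if u \<in> {1..n} then S u \<subseteq> {1..n} - {u} else S u = {})"

definition edge :: "(nat \<Rightarrow> nat set) \<Rightarrow> nat \<Rightarrow> nat \<Rightarrow> bool" where
  "edge S u v \<longleftrightarrow> u \<in> S v \<or> v \<in> S u"

fun reach :: "(nat \<Rightarrow> nat set) \<Rightarrow> nat \<Rightarrow> nat \<Rightarrow> nat \<Rightarrow> bool" where
  "reach S 0 u v \<longleftrightarrow> u = v"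
| "reach S (Suc k) u v \<longleftrightarrow> reach S k u v \<or> (\<exists>x. reach S k u x \<and> edge S x v)"

definition gdist :: "(nat \<Rightarrow> nat set) \<Rightarrow> nat \<Rightarrow> nat \<Rightarrow> enat" where
  "gdist S u v = (if \<exists>k. reach S k u v then enat (LEAST k. reach S k u v) else \<infinity>)"

definition player_cost :: "nat \<Rightarrow> (nat \<Rightarrow> real) \<Rightarrow> real \<Rightarrow> nat \<Rightarrow> (nat \<Rightarrow> nat set) \<Rightarrow> nat \<Rightarrow> real" where
  "player_cost n w \<alpha> \<beta> S u =
     \<alpha> * real (card (S u)) + (\<Sum>v\<in>{v\<in>{1..n}. gdist S u v > enat \<beta>}. w v)"

definition social_cost :: "nat \<Rightarrow> (nat \<Rightarrow> real) \<Rightarrow> real \<Rightarrow> nat \<Rightarrow> (nat \<Rightarrow> nat set) \<Rightarrow> real" where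
  "social_cost n w \<alpha> \<beta> S = (\<Sum>u\<in>{1..n}. player_cost n w \<alpha> \<beta> S u)"

definition opt :: "nat \<Rightarrow> (nat \<Rightarrow> real) \<Rightarrow> real \<Rightarrow> nat \<Rightarrow> real" where
  "opt n w \<alpha> \<beta> = Min (social_cost n w \<alpha> \<beta> ` {S. valid_profile n S})"

end

theory Submission
  imports Defs
begin

lemma reach_Suc': "reach S k u v \<Longrightarrow> reach S (Suc k) u v" by simp

lemma reach_mono: "reach S k u v \<Longrightarrow> k \<le> m \<Longrightarrow> reach S m u v"
  by (induction m) (auto simp: le_Suc_eq)

lemma reach_trans: "reach S a u x \<Longrightarrow> reach S b x v \<Longrightarrow> reach S (a+b) u v"
proof (induction b arbitrary: v)
  case 0 then show ?case by simp
next
  case (Suc b)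
  then show ?case by auto
qed

lemma edge_sym: "edge S x y = edge S y x" unfolding edge_def by auto

lemma reach_sym: "reach S k u v \<Longrightarrow> reach S k v u"
proof (induction k arbitrary: v)
  case 0 then show ?case by simp
next
  case (Suc k)
  show ?case
  proof (cases "reach S k u v")
    case True then show ?thesis using Suc by simp
  next
    case False
    then obtain y where y: "reach S k u y" "edge S y v" using Suc.prems by auto
    have "reach S (Suc 0) v y" using y(2) edge_sym[of S y v] by auto
    moreover have "reach S k y u" using Suc.IH y(1) by blast
    ultimately show ?thesis using reach_trans by fastforce
  qed
qed

lemma reach_closed:
  assumes "valid_profile n S" "u \<in> {1..n}"
  shows "reach S k u v \<Longrightarrow> v \<in> {1..n}"
proof (induction k arbitrary: v)
  case 0 then show ?case using assms by simp
next
  case (Suc k)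
  show ?case
  proof (cases "reach S k u v")
    case True then show ?thesis using Suc by simp
  next
    case False
    then obtain x where x: "reach S k u x" "edge S x v" using Suc.prems by auto
    have xV: "x \<in> {1..n}" using Suc.IH x(1) by blast
    show ?thesis
    proof (cases "v \<in> S x")
      case True then show ?thesis using assms(1) xV unfolding valid_profile_def
        by (metis Diff_subset subsetD)
    next
      case False
      then have "x \<in> S v" using x(2) unfolding edge_def by auto
      then show ?thesis using assms(1) unfolding valid_profile_def
        by (metis empty_iff)
    qed
  qed
qed

definition conn :: "(nat \<Rightarrow> nat set) \<Rightarrow> nat \<Rightarrow> nat \<Rightarrow> bool" where
  "conn S u v \<longleftrightarrow> (\<exists>k. reach S k u v)"

lemma conn_refl: "conn S u u" unfolding conn_def by (metis reach.simps(1))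
lemma conn_sym: "conn S u v \<Longrightarrow> conn S v u" unfolding conn_def using reach_sym by blast
lemma conn_trans: "conn S u v \<Longrightarrow> conn S v x \<Longrightarrow> conn S u x"
  unfolding conn_def using reach_trans by blast

lemma lower_bound:
  assumes valid: "valid_profile n S" and n1: "n \<ge> 1"
    and wpos: "\<forall>u\<in>{1..n}. w u > 0" and apos: "\<alpha> > 0"
  shows "min \<alpha> (\<Sum>u\<in>{1..n}. w u) * (real n - 1) \<le> social_cost n w \<alpha> \<beta> S"
proof -
  define V where "V = {1..n::nat}"
  define W where "W = (\<Sum>u\<in>V. w u)"
  define r where "r v = (LEAST x. conn S v x)" for v
  have conn_r: "conn S v (r v)" for v unfolding r_def by (rule LeastI[of _ v]) (rule conn_refl)
  have r_eq: "conn S u v \<Longrightarrow> r u = r v" for u v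
  proof -
    assume c: "conn S u v"
    have "(\<lambda>x. conn S u x) = (\<lambda>x. conn S v x)"
      using c conn_sym conn_trans by blast
    then show ?thesis unfolding r_def by simp
  qed
  have r_idem: "r (r v) = r v" for v using r_eq[OF conn_r[of v]] by simp
  have rV: "v \<in> V \<Longrightarrow> r v \<in> V" for v
    using conn_r[of v] reach_closed[OF valid] unfolding conn_def V_def by blast
  define R where "R = {v\<in>V. r v = v}"
  have rR: "v \<in> V \<Longrightarrow> r v \<in> R" for v using rV r_idem unfolding R_def by auto
  have finV: "finite V" unfolding V_def by simp
  have RV: "R \<subseteq> V" unfolding R_def by auto
  have finR: "finite R" using RV finV finite_subset by blast
  have k1: "card R \<ge> 1"
  proof -
    have "1 \<in> V" using n1 unfolding V_def by simp
    then have "R \<noteq> {}" using rR by blast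
    then show ?thesis using finR by (simp add: Suc_le_eq card_gt_0_iff)
  qed
  have kn: "card R \<le> n" using card_mono[OF finV RV] unfolding V_def by simp
  define d where "d v = (LEAST k. reach S k (r v) v)" for v
  have reach_d: "reach S (d v) (r v) v" for v
    unfolding d_def using conn_sym[OF conn_r[of v]] unfolding conn_def by (rule LeastI_ex)
  define N where "N = V - R"
  have pex: "\<forall>v\<in>N. \<exists>x. edge S x v \<and> d x < d v"
  proof
    fix v assume vN: "v \<in> N"
    then have nr: "r v \<noteq> v" unfolding N_def R_def by auto
    have "d v \<noteq> 0" using reach_d[of v] nr by (metis reach.simps(1))
    then obtain j where j: "d v = Suc j" using not0_implies_Suc by blast
    have "reach S (Suc j) (r v) v" using reach_d[of v] j by simp
    moreover have "\<not> reach S j (r v) v"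
      using not_less_Least[of j "\<lambda>k. reach S k (r v) v"] j unfolding d_def by simp
    ultimately obtain x where x: "reach S j (r v) x" "edge S x v" by auto
    have "conn S (r v) x" using x(1) unfolding conn_def by blast
    then have "r (r v) = r x" by (rule r_eq)
    then have "r x = r v" using r_idem by simp
    then have "reach S j (r x) x" using x(1) by simp
    then have "d x \<le> j" unfolding d_def by (rule Least_le)
    then show "\<exists>x. edge S x v \<and> d x < d v" using x(2) j by auto
  qed
  then obtain p where p: "\<forall>v\<in>N. edge S (p v) v \<and> d (p v) < d v" by metis
  define f where "f v = (if p v \<in> S v then (v, p v) else (p v, v))" for v
  have NV: "N \<subseteq> V" unfolding N_def by auto
  have fsub: "f ` N \<subseteq> Sigma V S"
  proof
    fix z assume "z \<in> f ` N"
    then obtain v where v: "v \<in> N" "z = f v" by auto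
    show "z \<in> Sigma V S"
    proof (cases "p v \<in> S v")
      case True then show ?thesis using v NV unfolding f_def by auto
    next
      case False
      then have vS: "v \<in> S (p v)" using p v(1) unfolding edge_def by auto
      then have "p v \<in> V" using valid unfolding valid_profile_def V_def
        by (metis empty_iff)
      then show ?thesis using vS False v unfolding f_def by auto
    qed
  qed
  have finj: "inj_on f N"
  proof (rule inj_onI)
    fix a b assume ab: "a \<in> N" "b \<in> N" "f a = f b"
    show "a = b"
    proof (rule ccontr)
      assume ne: "a \<noteq> b"
      have "a = p b \<and> b = p a"
        using ab(3) ne unfolding f_def by (auto split: if_splits)
      then show False using p ab(1,2) by (metis less_asym)
    qed
  qed
  have finSig: "finite (Sigma V S)"
  proof -
    have "Sigma V S \<subseteq> V \<times> V"
    proof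
      fix z assume z: "z \<in> Sigma V S"
      then have "fst z \<in> V" "snd z \<in> S (fst z)" by auto
      moreover then have "S (fst z) \<subseteq> V" using valid unfolding valid_profile_def V_def
        by (metis Diff_subset order_trans)
      ultimately show "z \<in> V \<times> V" by (auto simp: mem_Times_iff)
    qed
    then show ?thesis using finV finite_subset by blast
  qed
  have "card N \<le> card (Sigma V S)"
    using card_inj_on_le[OF finj fsub finSig] .
  also have "card (Sigma V S) = (\<Sum>u\<in>V. card (S u))"
  proof (rule card_SigmaI)
    show "finite V" by (rule finV)
    show "\<forall>a\<in>V. finite (S a)"
    proof
      fix a assume "a \<in> V"
      then have "S a \<subseteq> V" using valid unfolding valid_profile_def V_def
        by (metis Diff_subset order_trans)
      then show "finite (S a)" using finV finite_subset by blast
    qed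
  qed
  finally have cardN: "card N \<le> (\<Sum>u\<in>V. card (S u))" .
  have cN: "card N = n - card R" unfolding N_def using card_Diff_subset[OF finR RV] V_def by simp
  define far where "far u = (\<Sum>v\<in>{v\<in>{1..n}. gdist S u v > enat \<beta>}. w v)" for u
  have wnn: "v \<in> V \<Longrightarrow> w v \<ge> 0" for v using wpos unfolding V_def by fastforce
  have far_nn: "far u \<ge> 0" for u unfolding far_def using wnn V_def
    by (intro sum_nonneg) auto
  have far_ge: "(\<Sum>v\<in>V. if r v \<noteq> u then w v else 0) \<le> far u" if uR: "u \<in> R" for u
  proof -
    have "(\<Sum>v\<in>V. if r v \<noteq> u then w v else 0) = (\<Sum>v\<in>{v\<in>V. r v \<noteq> u}. w v)"
      using finV by (simp add: sum.inter_filter)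
    also have "\<dots> \<le> far u" unfolding far_def
    proof (rule sum_mono2)
      show "finite {v \<in> {1..n}. enat \<beta> < gdist S u v}" by simp
      show "{v \<in> V. r v \<noteq> u} \<subseteq> {v \<in> {1..n}. enat \<beta> < gdist S u v}"
      proof
        fix v assume v: "v \<in> {v \<in> V. r v \<noteq> u}"
        have "\<not> conn S u v"
        proof
          assume "conn S u v"
          then have "r u = r v" by (rule r_eq)
          then show False using uR v unfolding R_def by auto
        qed
        then have "gdist S u v = \<infinity>" unfolding gdist_def conn_def by auto
        then show "v \<in> {v \<in> {1..n}. enat \<beta> < gdist S u v}" using v V_def by auto
      qed
      show "\<And>b. b \<in> {v \<in> {1..n}. enat \<beta> < gdist S u v} - {v \<in> V. r v \<noteq> u} \<Longrightarrow> 0 \<le> w b"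
        using wnn V_def by auto
    qed
    finally show ?thesis .
  qed
  have "(\<Sum>u\<in>R. \<Sum>v\<in>V. if r v \<noteq> u then w v else 0) = (\<Sum>v\<in>V. \<Sum>u\<in>R. if r v \<noteq> u then w v else 0)"
    by (rule sum.swap)
  also have "\<dots> = (\<Sum>v\<in>V. (real (card R) - 1) * w v)"
  proof (rule sum.cong)
    fix v assume v: "v \<in> V"
    have "(\<Sum>u\<in>R. if r v \<noteq> u then w v else 0) = (\<Sum>u\<in>{u\<in>R. r v \<noteq> u}. w v)"
      by (rule sum.inter_filter[OF finR, symmetric])
    also have "{u\<in>R. r v \<noteq> u} = R - {r v}" by auto
    also have "(\<Sum>u\<in>R - {r v}. w v) = real (card (R - {r v})) * w v" by simp
    also have "card (R - {r v}) = card R - 1" using rR[OF v] finR by simp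
    finally show "(\<Sum>u\<in>R. if r v \<noteq> u then w v else 0) = (real (card R) - 1) * w v"
      using k1 by (simp add: of_nat_diff)
  qed simp
  also have "\<dots> = (real (card R) - 1) * W" unfolding W_def by (simp add: sum_distrib_left)
  finally have sw: "(\<Sum>u\<in>R. \<Sum>v\<in>V. if r v \<noteq> u then w v else 0) = (real (card R) - 1) * W" .
  have "(real (card R) - 1) * W \<le> (\<Sum>u\<in>R. far u)"
    unfolding sw[symmetric] by (rule sum_mono) (rule far_ge)
  also have "\<dots> \<le> (\<Sum>u\<in>V. far u)" using far_nn RV finV by (intro sum_mono2) auto
  finally have farb: "(real (card R) - 1) * W \<le> (\<Sum>u\<in>V. far u)" .
  have sc: "social_cost n w \<alpha> \<beta> S = \<alpha> * real (\<Sum>u\<in>V. card (S u)) + (\<Sum>u\<in>V. far u)"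
    unfolding social_cost_def player_cost_def far_def V_def
    by (simp add: sum.distrib sum_distrib_left)
  have lb1: "real n - real (card R) \<le> real (\<Sum>u\<in>V. card (S u))"
  proof -
    have "real (n - card R) \<le> real (\<Sum>u\<in>V. card (S u))" using cardN cN by (simp only: of_nat_le_iff)
    moreover have "real (n - card R) = real n - real (card R)" using kn by (rule of_nat_diff)
    ultimately show ?thesis by simp
  qed
  define m where "m = min \<alpha> W"
  have "m * (real n - 1) = m * (real n - real (card R)) + m * (real (card R) - 1)"
    by (simp add: algebra_simps)
  also have "\<dots> \<le> \<alpha> * (real n - real (card R)) + W * (real (card R) - 1)"
  proof (rule add_mono)
    show "m * (real n - real (card R)) \<le> \<alpha> * (real n - real (card R))"
      using kn unfolding m_def by (intro mult_right_mono) auto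
    show "m * (real (card R) - 1) \<le> W * (real (card R) - 1)"
      using k1 unfolding m_def by (intro mult_right_mono) auto
  qed
  also have "\<dots> \<le> \<alpha> * real (\<Sum>u\<in>V. card (S u)) + (\<Sum>u\<in>V. far u)"
    using mult_left_mono[OF lb1, of \<alpha>] apos farb by (intro add_mono) (auto simp: algebra_simps)
  finally show ?thesis unfolding sc m_def W_def V_def .
qed

lemma reach_empty: "reach (\<lambda>_. {}) k u v \<longleftrightarrow> u = v"
  by (induction k arbitrary: v) (auto simp: edge_def)

lemma empty_cost:
  assumes n1: "n \<ge> 1"
  shows "social_cost n w \<alpha> \<beta> (\<lambda>_. {}) = (\<Sum>u\<in>{1..n}. w u) * (real n - 1)"
proof -
  have gd: "gdist (\<lambda>_. {}) u v = (if u = v then 0 else \<infinity>)" for u v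
    unfolding gdist_def reach_empty by (auto simp: zero_enat_def)
  have pc: "player_cost n w \<alpha> \<beta> (\<lambda>_. {}) u = (\<Sum>v\<in>{1..n}. w v) - w u" if u: "u \<in> {1..n}" for u
  proof -
    have "{v\<in>{1..n}. gdist (\<lambda>_. {}) u v > enat \<beta>} = {1..n} - {u}"
      by (auto simp: gd zero_enat_def)
    then show ?thesis unfolding player_cost_def using u by (simp add: sum_diff1)
  qed
  have "social_cost n w \<alpha> \<beta> (\<lambda>_. {}) = (\<Sum>u\<in>{1..n}. (\<Sum>v\<in>{1..n}. w v) - w u)"
    unfolding social_cost_def using pc by (intro sum.cong) auto
  also have "\<dots> = real n * (\<Sum>v\<in>{1..n}. w v) - (\<Sum>v\<in>{1..n}. w v)"
    by (simp add: sum_subtractf)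
  finally show ?thesis by (simp add: algebra_simps)
qed

lemma star_cost:
  assumes n1: "n \<ge> 1" and b2: "\<beta> \<ge> 2"
  shows "social_cost n w \<alpha> \<beta> (\<lambda>u. if u = 1 then {2..n} else {}) = \<alpha> * (real n - 1)"
proof -
  define S where "S = (\<lambda>u::nat. if u = 1 then {2..n} else {})"
  have r2: "reach S 2 u v" if u: "u \<in> {1..n}" and v: "v \<in> {1..n}" for u v
  proof -
    have e1: "edge S 1 x" if "x \<in> {1..n}" "x \<noteq> 1" for x
      using that unfolding edge_def S_def by auto
    have r1: "reach S (Suc 0) u 1"
    proof (cases "u = 1")
      case True then show ?thesis by simp
    next
      case False
      then have "edge S u 1" using e1[OF u] edge_sym by metis
      then show ?thesis by auto
    qed
    show ?thesis
    proof (cases "v = 1")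
      case True then show ?thesis using r1 by (simp add: numeral_2_eq_2)
    next
      case False
      then have "edge S 1 v" using e1[OF v] by blast
      then show ?thesis using r1 by (auto simp: numeral_2_eq_2)
    qed
  qed
  have far: "{v\<in>{1..n}. gdist S u v > enat \<beta>} = {}" if u: "u \<in> {1..n}" for u
  proof -
    have "\<not> gdist S u v > enat \<beta>" if v: "v \<in> {1..n}" for v
    proof -
      have "(LEAST k. reach S k u v) \<le> 2" using r2[OF u v] by (rule Least_le)
      then have "gdist S u v \<le> enat 2" unfolding gdist_def using r2[OF u v] by auto
      then show ?thesis using b2 by (metis enat_ord_simps(1) leD order.trans)
    qed
    then show ?thesis by auto
  qed
  have "social_cost n w \<alpha> \<beta> S = (\<Sum>u\<in>{1..n}. \<alpha> * real (card (S u)))"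
    unfolding social_cost_def player_cost_def
  proof (intro sum.cong refl)
    fix u assume "u \<in> {1..n}"
    then show "\<alpha> * real (card (S u)) + (\<Sum>v\<in>{v\<in>{1..n}. gdist S u v > enat \<beta>}. w v) = \<alpha> * real (card (S u))"
      using far[of u] by (simp only:) simp
  qed
  also have "\<dots> = (\<Sum>u\<in>{1..n}. if u = 1 then \<alpha> * real (n - 1) else 0)"
    unfolding S_def by (intro sum.cong) auto
  also have "\<dots> = \<alpha> * real (n - 1)" using n1 by (simp add: sum.delta)
  finally show ?thesis using n1 unfolding S_def by (simp add: of_nat_diff)
qed

theorem proposition2:
  fixes n :: nat and w :: "nat \<Rightarrow> real" and \<alpha> :: real and \<beta> :: nat
  assumes "\<forall>u\<in>{1..n}. w u > 0"
    and "\<alpha> > 0"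
    and "1 \<le> \<beta>" and "\<beta> \<le> n - 1"
    and "\<beta> > 1"
  shows "opt n w \<alpha> \<beta> = min \<alpha> (\<Sum>u\<in>{1..n}. w u) * (real n - 1)"
proof -
  have n1: "n \<ge> 1" using assms(4,5) by simp
  have b2: "\<beta> \<ge> 2" using assms(5) by simp
  have fin: "finite {S. valid_profile n S}"
  proof (rule finite_subset)
    show "{S. valid_profile n S} \<subseteq> {f. \<forall>x. (x \<in> {1..n} \<longrightarrow> f x \<in> Pow {1..n}) \<and> (x \<notin> {1..n} \<longrightarrow> f x = {})}"
      unfolding valid_profile_def by (auto split: if_splits)
    show "finite {f. \<forall>x. (x \<in> {1..n} \<longrightarrow> f x \<in> Pow {1..n}) \<and> (x \<notin> {1..n} \<longrightarrow> f x = ({}::nat set))}"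
      by (rule finite_set_of_finite_funs) auto
  qed
  have v1: "valid_profile n (\<lambda>_. {})" unfolding valid_profile_def by auto
  have v2: "valid_profile n (\<lambda>u. if u = 1 then {2..n} else {})" unfolding valid_profile_def by auto
  show ?thesis unfolding opt_def
  proof (rule Min_eqI)
    show "finite (social_cost n w \<alpha> \<beta> ` {S. valid_profile n S})" using fin by simp
    show "\<And>y. y \<in> social_cost n w \<alpha> \<beta> ` {S. valid_profile n S} \<Longrightarrow> min \<alpha> (\<Sum>u\<in>{1..n}. w u) * (real n - 1) \<le> y"
      using lower_bound[OF _ n1 assms(1,2)] by auto
    show "min \<alpha> (\<Sum>u\<in>{1..n}. w u) * (real n - 1) \<in> social_cost n w \<alpha> \<beta> ` {S. valid_profile n S}"
    proof (cases "\<alpha> \<le> (\<Sum>u\<in>{1..n}. w u)")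
      case True
      then show ?thesis using star_cost[OF n1 b2, of w \<alpha>] v2
        by (auto simp: min_def image_iff intro!: exI[of _ "\<lambda>u. if u = 1 then {2..n} else {}"])
    next
      case False
      then show ?thesis using empty_cost[OF n1, of w \<alpha> \<beta>] v1
        by (auto simp: min_def image_iff intro!: exI[of _ "\<lambda>_. {}"])
    qed
  qed
qed

end
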